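(* Let $k\ge 1$ be an integer and let $A_k=(a_{ij})_{1\le i,j\le k}$ be the $k\times k$ matrix with entries $a_{ij}=\frac{1}{2}|i-j|$. Let $C_k(\lambda)=\det(A_k-\lambda I_k)$ be its characteristic polynomial. Then $$C_k(\lambda)=(-1)^k\lambda^k\left(1-\frac{k}{4}\sum_{j=1}^{k-1}\frac{j}{j+1}\binom{k+j}{2j+1}\lambda^{-j-1}\right).$$
   Context: $I_k$ denotes the $k\times k$ identity matrix. The identity is one of polynomials in $\lambda$ (the right-hand side is a polynomial since $j+1\le k$). *)

theory Defs
  imports "Jordan_Normal_Form.Determinant"
begin

text \<open>The k x k matrix with entries a_ij = |i - j| / 2 (0-based indices; the entries
  only depend on i - j, so this is the same matrix as with 1-based indices).\<close>
definition A_mat :: "nat \<Rightarrow> real mat" where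
  "A_mat k = mat k k (\<lambda>(i, j). \<bar>real i - real j\<bar> / 2)"

definition C_charpoly :: "nat \<Rightarrow> real \<Rightarrow> real" where
  "C_charpoly k x = det (A_mat k - x \<cdot>\<^sub>m 1\<^sub>m k)"

end

theory Submission
  imports Defs
begin


definition S0 :: "nat \<Rightarrow> real \<Rightarrow> real" where
  "S0 n x = (\<Sum>m\<le>n. real ((n+m) choose (2*m)) * x^(n-m))"
definition S1 :: "nat \<Rightarrow> real \<Rightarrow> real" where
  "S1 n x = (\<Sum>m\<le>n. real ((n+1+m) choose (2*m+1)) * x^(n-m))"

lemma sumshift: "sum f {..n::nat} = f 0 + sum (\<lambda>i. f (Suc i)) {..<n}"
  by (induction n) (auto simp: lessThan_Suc add_ac)

lemma xS0: "x * S0 n x = x^(Suc n) + (\<Sum>m\<le>n. real ((n+1+m) choose (2*m+2)) * x^(n-m))"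
proof -
  have "x * S0 n x = (\<Sum>m\<le>n. real ((n+m) choose (2*m)) * x^(Suc n-m))"
    unfolding S0_def sum_distrib_left
    by (rule sum.cong) (auto simp: Suc_diff_le)
  also have "\<dots> = x^(Suc n) + (\<Sum>m<n. real ((n+Suc m) choose (2*Suc m)) * x^(Suc n-Suc m))"
    by (subst sumshift) (simp del: binomial_Suc_Suc)
  also have "(\<Sum>m<n. real ((n+Suc m) choose (2*Suc m)) * x^(Suc n-Suc m))
      = (\<Sum>m\<le>n. real ((n+1+m) choose (2*m+2)) * x^(n-m))"
    unfolding lessThan_Suc_atMost[symmetric] by (simp add: binomial_eq_0)
  finally show ?thesis .
qed

lemma S0_Suc: "S0 (Suc n) x = S1 n x + x * S0 n x"
proof -
  have "S0 (Suc n) x = x^(Suc n) + (\<Sum>m\<le>n. real ((Suc n+Suc m) choose (2*Suc m)) * x^(Suc n-Suc m))"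
    unfolding S0_def sum.atMost_Suc_shift by simp
  also have "(\<Sum>m\<le>n. real ((Suc n+Suc m) choose (2*Suc m)) * x^(Suc n-Suc m))
     = S1 n x + (\<Sum>m\<le>n. real ((n+1+m) choose (2*m+2)) * x^(n-m))"
    unfolding S1_def sum.distrib[symmetric]
    by (rule sum.cong) (auto simp: algebra_simps numeral_2_eq_2)
  finally show ?thesis using xS0[of x n] by simp
qed

lemma S1_Suc: "S1 (Suc n) x = S0 (Suc n) x + x * S1 n x"
proof -
  have "x * S1 n x = (\<Sum>m\<le>Suc n. real ((Suc n+m) choose (2*m+1)) * x^(Suc n-m))"
    unfolding S1_def sum_distrib_left
    by (simp add: binomial_eq_0 Suc_diff_le mult_ac)
  then show ?thesis unfolding S1_def S0_def
    by (simp add: sum.distrib[symmetric] algebra_simps)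
qed

lemma S1_rec: "S1 (Suc (Suc n)) x = (1+2*x) * S1 (Suc n) x - x^2 * S1 n x"
  using S1_Suc[of "Suc n" x] S0_Suc[of "Suc n" x] S1_Suc[of n x]
  by (simp add: algebra_simps power2_eq_square)

lemma binom_step: "real (Suc (2*j+1)) * real ((n+1+j) choose (2*j+2)) = real (n - j) * real ((n+1+j) choose (2*j+1))"
proof -
  have a: "Suc (2*j+1) * ((n+1+j) choose Suc (2*j+1)) = (n+1+j) * ((n+1+j-1) choose (2*j+1))"
    by (rule binomial_absorption)
  have b: "(n+1+j - (2*j+1)) * ((n+1+j) choose (2*j+1)) = (n+1+j) * ((n+1+j-1) choose (2*j+1))"
    by (rule binomial_absorb_comp)
  have c: "n+1+j - (2*j+1) = n - j" by simp
  have "Suc (2*j+1) * ((n+1+j) choose (2*j+2)) = (n - j) * ((n+1+j) choose (2*j+1))"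
    using a b c by (simp add: numeral_2_eq_2)
  then show ?thesis by (metis of_nat_mult)
qed

lemma term_id: assumes "j \<le> n"
  shows "real ((n+1+j) choose (2*j+2)) / 2 - real n / 4 * real ((n+1+j) choose (2*j+1))
   = - (real (Suc n) / 4 * (real j / real (j+1) * real ((n+1+j) choose (2*j+1))))"
proof -
  have e: "real (Suc (2*j+1)) * real ((n+1+j) choose (2*j+2)) = (real n - real j) * real ((n+1+j) choose (2*j+1))"
    using binom_step[of j n] assms by (simp add: of_nat_diff)
  have "real ((n+1+j) choose (2*j+2)) = (real n - real j) * real ((n+1+j) choose (2*j+1)) / (2*real j+2)"
    using e by (simp add: field_simps)
  then show ?thesis by (simp add: field_simps)
qed

lemma final_alg:
  fixes x :: real
  assumes "x \<noteq> 0"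
  shows "(x/2) * S0 n x - real n/4 * S1 n x + x^(Suc n)/2 =
    x ^ Suc n * (1 - real (Suc n) / 4 * (\<Sum>j = 1..Suc n - 1.
          real j / real (j + 1) * real ((Suc n + j) choose (2 * j + 1)) * inverse x ^ (j + 1)))"
proof -
  have sum01: "(\<Sum>j = 1..n. real j / real (j + 1) * real ((Suc n + j) choose (2 * j + 1)) * x^(n-j))
    = (\<Sum>j\<le>n. real j / real (j + 1) * real ((Suc n + j) choose (2 * j + 1)) * x^(n-j))"
    by (rule sum.mono_neutral_left) auto
  have pw: "x ^ Suc n * inverse x ^ (j+1) = x^(n-j)" if "j \<le> n" for j
  proof -
    have "x ^ Suc n = x^(n-j) * x^(j+1)" using that by (simp flip: power_add)
    then show ?thesis using assms by (simp add: power_inverse field_simps)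
  qed
  have "x ^ Suc n * (1 - real (Suc n) / 4 * (\<Sum>j = 1..Suc n - 1.
          real j / real (j + 1) * real ((Suc n + j) choose (2 * j + 1)) * inverse x ^ (j + 1)))
     = x ^ Suc n - real (Suc n) / 4 * (\<Sum>j = 1..n.
          real j / real (j + 1) * real ((Suc n + j) choose (2 * j + 1)) * (x ^ Suc n * inverse x ^ (j + 1)))"
    by (simp add: algebra_simps sum_distrib_left)
  also have "\<dots> = x ^ Suc n - real (Suc n) / 4 * (\<Sum>j\<le>n.
          real j / real (j + 1) * real ((Suc n + j) choose (2 * j + 1)) * x^(n-j))"
    using pw sum01 by simp
  finally have R: "x ^ Suc n * (1 - real (Suc n) / 4 * (\<Sum>j = 1..Suc n - 1.
          real j / real (j + 1) * real ((Suc n + j) choose (2 * j + 1)) * inverse x ^ (j + 1)))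
     = x ^ Suc n - real (Suc n) / 4 * (\<Sum>j\<le>n.
          real j / real (j + 1) * real ((Suc n + j) choose (2 * j + 1)) * x^(n-j))" .
  have L: "(x/2) * S0 n x - real n/4 * S1 n x + x^(Suc n)/2 = x^Suc n +
     (\<Sum>j\<le>n. (real ((n+1+j) choose (2*j+2)) / 2 - real n / 4 * real ((n+1+j) choose (2*j+1))) * x^(n-j))"
  proof -
    have "(x/2) * S0 n x = x^Suc n / 2 + (\<Sum>j\<le>n. real ((n+1+j) choose (2*j+2)) / 2 * x^(n-j))"
      using xS0[of x n] by (simp add: sum_divide_distrib[symmetric] del: binomial_Suc_Suc)
    moreover have "real n/4 * S1 n x = (\<Sum>j\<le>n. real n / 4 * real ((n+1+j) choose (2*j+1)) * x^(n-j))"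
      unfolding S1_def sum_distrib_left by (simp add: mult_ac del: binomial_Suc_Suc)
    ultimately show ?thesis
      by (simp add: sum_subtractf left_diff_distrib del: binomial_Suc_Suc) (simp add: field_simps del: binomial_Suc_Suc)
  qed
  have "(\<Sum>j\<le>n. (real ((n+1+j) choose (2*j+2)) / 2 - real n / 4 * real ((n+1+j) choose (2*j+1))) * x^(n-j))
     = - (real (Suc n) / 4 * (\<Sum>j\<le>n.
          real j / real (j + 1) * real ((Suc n + j) choose (2 * j + 1)) * x^(n-j)))"
    unfolding sum_distrib_left sum_negf[symmetric]
  proof (rule sum.cong)
    fix j assume "j \<in> {..n}"
    then have "j \<le> n" by simp
    note t = term_id[OF this]
    show "(real ((n+1+j) choose (2*j+2)) / 2 - real n / 4 * real ((n+1+j) choose (2*j+1))) * x^(n-j)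
      = - (real (Suc n) / 4 * (real j / real (j + 1) * real ((Suc n + j) choose (2 * j + 1)) * x^(n-j)))"
      unfolding t by (simp del: binomial_Suc_Suc)
  qed simp
  with L R show ?thesis by simp
qed



definition Tm :: "nat \<Rightarrow> real \<Rightarrow> real mat" where
  "Tm n x = mat n n (\<lambda>(i,j). if i = j then -1-2*x else if Suc i = j \<or> Suc j = i then x else 0)"

lemma Tm_carrier[simp]: "Tm n x \<in> carrier_mat n n" by (simp add: Tm_def)
lemma Tm_dims[simp]: "dim_row (Tm n x) = n" "dim_col (Tm n x) = n" by (simp_all add: Tm_def)
lemma Tm_index: "i<n \<Longrightarrow> j<n \<Longrightarrow> Tm n x $$ (i,j) = (if i = j then -1-2*x else if Suc i = j \<or> Suc j = i then x else 0)"
  by (simp add: Tm_def)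

lemma Tm_del_last: "mat_delete (Tm (Suc n) x) n n = Tm n x"
  by (rule eq_matI) (auto simp: mat_delete_def Tm_def)

lemma Tm_del_first: "mat_delete (Tm (Suc n) x) 0 0 = Tm n x"
  by (rule eq_matI) (auto simp: mat_delete_def Tm_def)

lemma Tm_rec: "det (Tm (Suc (Suc n)) x) = (-1-2*x) * det (Tm (Suc n) x) - x^2 * det (Tm n x)"
proof -
  let ?T = "Tm (Suc (Suc n)) x"
  let ?B = "mat_delete ?T (Suc n) n"
  have B: "?B \<in> carrier_mat (Suc n) (Suc n)" using mat_delete_carrier[OF Tm_carrier[of "Suc (Suc n)" x]] by simp
  have detB: "det ?B = x * det (Tm n x)"
  proof -
    have "det ?B = (\<Sum>i<Suc n. ?B $$ (i,n) * cofactor ?B i n)"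
      by (rule laplace_expansion_column[OF B]) simp
    also have "\<dots> = ?B $$ (n,n) * cofactor ?B n n"
      by (subst sum.lessThan_Suc) (auto intro!: sum.neutral simp: mat_delete_def Tm_def)
    also have D: "mat_delete ?B n n = Tm n x"
      by (rule eq_matI) (auto simp: mat_delete_def Tm_def)
    have "?B $$ (n,n) = x" by (simp add: mat_delete_def Tm_def)
    ultimately show ?thesis by (simp add: cofactor_def D)
  qed
  have "det ?T = (\<Sum>j<Suc (Suc n). ?T $$ (Suc n,j) * cofactor ?T (Suc n) j)"
    by (rule laplace_expansion_row[OF Tm_carrier]) simp
  also have "\<dots> = ?T $$ (Suc n,n) * cofactor ?T (Suc n) n + ?T $$ (Suc n,Suc n) * cofactor ?T (Suc n) (Suc n)"
    by (simp add: sum.lessThan_Suc, rule sum.neutral) (auto simp: Tm_def)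
  also have "cofactor ?T (Suc n) (Suc n) = det (Tm (Suc n) x)"
    by (simp add: cofactor_def Tm_del_last)
  also have "cofactor ?T (Suc n) n = - det ?B"
    by (simp add: cofactor_def)
  also have "?T $$ (Suc n,n) = x" by (simp add: Tm_def)
  also have "?T $$ (Suc n,Suc n) = -1-2*x" by (simp add: Tm_def)
  finally show ?thesis by (simp add: detB power2_eq_square)
qed



lemma Tm_closed: "det (Tm n x) = (-1)^n * S1 n x \<and> det (Tm (Suc n) x) = (-1)^(Suc n) * S1 (Suc n) x"
proof (induction n)
  case 0
  have "det (Tm 1 x) = -1-2*x" by (subst det_single) (auto simp: Tm_def)
  then show ?case by (simp add: S1_def binomial_eq_0 eval_nat_numeral)
next
  case (Suc n)
  have "det (Tm (Suc (Suc n)) x) = (-1-2*x) * ((-1)^Suc n * S1 (Suc n) x) - x^2 * ((-1)^n * S1 n x)"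
    using Tm_rec[of n x] Suc.IH by simp
  also have "\<dots> = (-1)^(Suc (Suc n)) * S1 (Suc (Suc n)) x" by (simp add: S1_rec algebra_simps)
  finally show ?case using Suc.IH by simp
qed

definition vv :: "nat \<Rightarrow> real \<Rightarrow> nat \<Rightarrow> real" where
  "vv n x i = (if i = 0 then -x/2 else 0) + (if i = n-1 then x/2 else 0)"

definition Nn :: "nat \<Rightarrow> real \<Rightarrow> real mat" where
  "Nn n x = mat (Suc n) (Suc n) (\<lambda>(i,j). if i<n \<and> j<n then Tm n x $$ (i,j) else if i<n then vv n x i
     else if j<n then vv n x j else real n/4 - x/2)"

lemma Nn_carrier[simp]: "Nn n x \<in> carrier_mat (Suc n) (Suc n)" by (simp add: Nn_def)

lemma Nn_minor2: assumes "c < n" "i < n"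
  shows "mat_delete (mat_delete (Nn n x) n c) i (n-1) = mat_delete (Tm n x) i c"
  by (rule eq_matI) (insert assms, auto simp: mat_delete_def Nn_def Tm_def)

lemma Tm_minor_ut: "det (mat_delete (Tm (Suc m) x) 0 m) = x^m"
proof -
  let ?A = "mat_delete (Tm (Suc m) x) 0 m"
  have c: "?A \<in> carrier_mat m m" by (simp add: mat_delete_def)
  have "upper_triangular ?A" unfolding upper_triangular_def by (auto simp: mat_delete_def Tm_def)
  then have "det ?A = prod_list (diag_mat ?A)" using det_upper_triangular c by blast
  also have "diag_mat ?A = replicate m x"
    by (rule nth_equalityI) (auto simp: diag_mat_def mat_delete_def Tm_def)
  finally show ?thesis by simp
qed

lemma Tm_minor_lt: "det (mat_delete (Tm (Suc m) x) m 0) = x^m"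
proof -
  let ?A = "mat_delete (Tm (Suc m) x) m 0"
  have c: "?A \<in> carrier_mat m m" by (simp add: mat_delete_def)
  have "det ?A = prod_list (diag_mat ?A)"
    by (rule det_lower_triangular[OF _ c]) (auto simp: mat_delete_def Tm_def)
  also have "diag_mat ?A = replicate m x"
    by (rule nth_equalityI) (auto simp: diag_mat_def mat_delete_def Tm_def)
  finally show ?thesis by simp
qed

lemma detB: assumes "c < n" "2 \<le> n"
  shows "det (mat_delete (Nn n x) n c) = (-x/2) * (-1)^(n-1) * det (mat_delete (Tm n x) 0 c)
     + (x/2) * det (mat_delete (Tm n x) (n-1) c)"
proof -
  let ?B = "mat_delete (Nn n x) n c"
  have B: "?B \<in> carrier_mat n n" using mat_delete_carrier[OF Nn_carrier[of n x]] by simp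
  have nc: "\<not> (n-1 < c)" using assms by simp
  have e1: "?B $$ (0,n-1) = -x/2" using assms nc by (simp add: mat_delete_def Nn_def vv_def)
  have e2: "?B $$ (n-1,n-1) = x/2" using assms nc by (simp add: mat_delete_def Nn_def vv_def)
  have c1: "cofactor ?B 0 (n-1) = (-1)^(n-1) * det (mat_delete (Tm n x) 0 c)"
    unfolding cofactor_def using assms Nn_minor2[of c n 0 x] by simp
  have c2: "cofactor ?B (n-1) (n-1) = det (mat_delete (Tm n x) (n-1) c)"
    unfolding cofactor_def using assms Nn_minor2[of c n "n-1" x] by (simp flip: mult_2)
  have "det ?B = (\<Sum>i<n. ?B $$ (i,n-1) * cofactor ?B i (n-1))"
    by (rule laplace_expansion_column[OF B]) (use assms in auto)
  also have "\<dots> = (\<Sum>i\<in>{0,n-1}. ?B $$ (i,n-1) * cofactor ?B i (n-1))"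
    by (rule sum.mono_neutral_right) (use assms in \<open>auto simp: mat_delete_def Nn_def vv_def\<close>)
  also have "\<dots> = ?B $$ (0,n-1) * cofactor ?B 0 (n-1) + ?B $$ (n-1,n-1) * cofactor ?B (n-1) (n-1)"
    using assms by simp
  finally show ?thesis unfolding e1 e2 c1 c2 by (simp add: mult_ac)
qed

lemma det_Nn: assumes "2 \<le> n"
  shows "det (Nn n x) = (real n/4 - x/2) * det (Tm n x) - x^2/2 * det (Tm (n-1) x) + (-1)^(Suc n) * x^(Suc n) / 2"
proof -
  obtain m where n: "n = Suc m" and m: "1 \<le> m" using assms by (cases n) auto
  let ?N = "Nn n x"
  have "det ?N = (\<Sum>j<Suc n. ?N $$ (n,j) * cofactor ?N n j)"
    by (rule laplace_expansion_row[OF Nn_carrier]) simp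
  also have "\<dots> = (\<Sum>j\<in>{0,n-1,n}. ?N $$ (n,j) * cofactor ?N n j)"
    by (rule sum.mono_neutral_right) (use assms in \<open>auto simp: Nn_def vv_def\<close>)
  also have "\<dots> = ?N $$ (n,0) * cofactor ?N n 0 + ?N $$ (n,n-1) * cofactor ?N n (n-1)
      + ?N $$ (n,n) * cofactor ?N n n"
    using assms by simp
  also have "?N $$ (n,0) = -x/2" using assms by (simp add: Nn_def vv_def)
  also have "?N $$ (n,n-1) = x/2" using assms by (simp add: Nn_def vv_def)
  also have "?N $$ (n,n) = real n/4 - x/2" by (simp add: Nn_def)
  also have "mat_delete ?N n n = Tm n x"
    by (rule eq_matI) (auto simp: mat_delete_def Nn_def Tm_def)
  then have "cofactor ?N n n = det (Tm n x)" by (simp add: cofactor_def flip: mult_2)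
  also have "cofactor ?N n 0 = (-1)^n * det (mat_delete ?N n 0)" by (simp add: cofactor_def)
  also have "cofactor ?N n (n-1) = - det (mat_delete ?N n (n-1))"
    using assms by (simp add: cofactor_def n)
  also have "det (mat_delete ?N n 0) = (-x/2) * (-1)^(n-1) * det (Tm (n-1) x) + (x/2) * x^(n-1)"
    using detB[of 0 n x] assms by (simp add: n Tm_del_first Tm_minor_lt)
  also have "det (mat_delete ?N n (n-1)) = (-x/2) * (-1)^(n-1) * x^(n-1) + (x/2) * det (Tm (n-1) x)"
    using detB[of "n-1" n x] assms by (simp add: n Tm_del_last Tm_minor_ut)
  finally show ?thesis
    by (simp add: n algebra_simps power2_eq_square)
qed

lemma det_Nn1: "det (Nn 1 x) = (1/4 - x/2) * (-1-2*x)"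
proof -
  have "upper_triangular (Nn 1 x)" unfolding upper_triangular_def
    by (auto simp: Nn_def vv_def)
  then have "det (Nn 1 x) = prod_list (diag_mat (Nn 1 x))" using det_upper_triangular Nn_carrier by blast
  also have "diag_mat (Nn 1 x) = [-1-2*x, 1/4 - x/2]"
    by (rule nth_equalityI) (auto simp: diag_mat_def Nn_def Tm_def less_Suc_eq numeral_2_eq_2)
  finally show ?thesis by simp
qed



lemma mult_entry: assumes "A \<in> carrier_mat m k" "B \<in> carrier_mat k p" "i < m" "j < p"
  shows "(A * B) $$ (i,j) = (\<Sum>l<k. A $$ (i,l) * B $$ (l,j))"
  using assms by (simp add: scalar_prod_def atLeast0LessThan)

definition Rm :: "nat \<Rightarrow> real mat" where
  "Rm n = mat (Suc n) (Suc n) (\<lambda>(i,l). if i < n then (if l = i then 1 else 0) - (if l = Suc i then 1 else 0)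
     else (if l = 0 then 1/2 else 0) + (if l = n then 1/2 else 0))"

definition Pm :: "nat \<Rightarrow> real mat" where
  "Pm n = mat (Suc n) (Suc n) (\<lambda>(i,j). (if j = i then 1 else 0) - (if j = Suc i then 1 else 0))"

definition Qm :: "nat \<Rightarrow> real mat" where
  "Qm n = mat (Suc n) (Suc n) (\<lambda>(i,j). (if j = i then 1 else 0) + (if i = n \<and> j < n then 1/2 else 0))"

lemma Rm_carrier[simp]: "Rm n \<in> carrier_mat (Suc n) (Suc n)" by (simp add: Rm_def)
lemma Pm_carrier[simp]: "Pm n \<in> carrier_mat (Suc n) (Suc n)" by (simp add: Pm_def)
lemma Qm_carrier[simp]: "Qm n \<in> carrier_mat (Suc n) (Suc n)" by (simp add: Qm_def)

lemma det_Pm: "det (Pm n) = 1"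
proof -
  have "upper_triangular (Pm n)" unfolding upper_triangular_def by (auto simp: Pm_def)
  then have "det (Pm n) = prod_list (diag_mat (Pm n))" using det_upper_triangular Pm_carrier by blast
  also have "diag_mat (Pm n) = map (\<lambda>i. 1) [0..<Suc n]"
    unfolding diag_mat_def by (auto simp: Pm_def simp del: upt_Suc intro!: map_cong)
  finally show ?thesis by (simp add: map_replicate_const)
qed

lemma det_Qm: "det (Qm n) = 1"
proof -
  have "det (Qm n) = prod_list (diag_mat (Qm n))"
    by (rule det_lower_triangular[OF _ Qm_carrier]) (auto simp: Qm_def)
  also have "diag_mat (Qm n) = map (\<lambda>i. 1) [0..<Suc n]"
    unfolding diag_mat_def by (auto simp: Qm_def simp del: upt_Suc intro!: map_cong)
  finally show ?thesis by (simp add: map_replicate_const)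
qed

lemma sum_delta_real: "(\<Sum>l<(m::nat). (if l = a then (c::real) else 0) * g l) = (if a < m then c * g a else 0)"
proof -
  have "(\<Sum>l<m. (if l = a then (c::real) else 0) * g l) = (\<Sum>l<m. if l = a then c * g l else 0)"
    by (rule sum.cong) auto
  then show ?thesis by simp
qed

lemma QP: "Qm n * Pm n = Rm n"
proof (rule eq_matI)
  fix i j assume i: "i < dim_row (Rm n)" and j: "j < dim_col (Rm n)"
  then have i: "i < Suc n" and j: "j < Suc n" by (auto simp: Rm_def)
  have "(Qm n * Pm n) $$ (i,j) = (\<Sum>l<Suc n. Qm n $$ (i,l) * Pm n $$ (l,j))"
    by (rule mult_entry[OF Qm_carrier Pm_carrier i j])
  also have "\<dots> = (\<Sum>l<Suc n. ((if l = i then 1 else 0) + (if i = n \<and> l < n then 1/2 else 0)) *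
      ((if j = l then 1 else 0) - (if j = Suc l then 1 else 0)))"
    by (rule sum.cong) (use i j in \<open>auto simp: Qm_def Pm_def\<close>)
  also have "\<dots> = Rm n $$ (i,j)"
  proof (cases "i < n")
    case True
    then show ?thesis using i j
      by (simp add: distrib_right sum.distrib sum_delta_real Rm_def)
  next
    case False
    then have iN: "i = n" using i by simp
    have tel: "(\<Sum>l<n. (if j = l then 1 else 0) - (if j = Suc l then 1 else (0::real))) = (if j = 0 then 1 else 0) - (if j = n then 1 else 0)"
      using sum_lessThan_telescope'[of "\<lambda>l. if j = l then 1 else (0::real)" n] by simp
    have "(\<Sum>l<Suc n. ((if l = i then 1 else 0) + (if i = n \<and> l < n then 1/2 else 0)) *
      ((if j = l then 1 else 0) - (if j = Suc l then 1 else (0::real))))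
      = (\<Sum>l<Suc n. (if l = n then 1 else 0) * ((if j = l then 1 else 0) - (if j = Suc l then 1 else (0::real))))
       + (\<Sum>l<n. 1/2 * ((if j = l then 1 else 0) - (if j = Suc l then 1 else (0::real))))"
      by (simp add: iN distrib_right sum.distrib lessThan_Suc)
    also have "\<dots> = (if j = n then 1 else 0) + 1/2 * ((if j = 0 then 1 else 0) - (if j = n then 1 else 0))"
      by (simp only: sum_delta_real flip: sum_distrib_left tel) (use j in auto)
    also have "\<dots> = Rm n $$ (i,j)" using iN j by (auto simp: Rm_def)
    finally show ?thesis using iN by simp
  qed
  finally show "(Qm n * Pm n) $$ (i,j) = Rm n $$ (i,j)" .
qed (auto simp: Rm_def Qm_def Pm_def)

lemma det_Rm: "det (Rm n) = 1"
  using det_mult[OF Qm_carrier Pm_carrier, of n] by (simp add: QP det_Pm det_Qm)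



definition Mf :: "real \<Rightarrow> nat \<Rightarrow> nat \<Rightarrow> real" where
  "Mf x a b = \<bar>real a - real b\<bar> / 2 - (if a = b then x else 0)"

lemma M_entry: "a < k \<Longrightarrow> b < k \<Longrightarrow> (A_mat k - x \<cdot>\<^sub>m 1\<^sub>m k) $$ (a,b) = Mf x a b"
  by (simp add: A_mat_def Mf_def)

lemma M_carrier[simp]: "A_mat k - x \<cdot>\<^sub>m 1\<^sub>m k \<in> carrier_mat k k"
  unfolding carrier_mat_def by (simp add: A_mat_def)

lemma Rm_comb: assumes "i < Suc n"
  shows "(\<Sum>l<Suc n. Rm n $$ (i,l) * g l) = (if i < n then g i - g (Suc i) else (g 0 + g n)/2)"
proof -
  have "(\<Sum>l<Suc n. Rm n $$ (i,l) * g l) = (\<Sum>l<Suc n. (if i < n then (if l = i then 1 else 0) * g l - (if l = Suc i then 1 else 0) * g l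
     else (if l = 0 then 1/2 else 0) * g l + (if l = n then 1/2 else 0) * g l))"
    by (rule sum.cong) (use assms in \<open>auto simp: Rm_def\<close>)
  also have "\<dots> = (if i < n then g i - g (Suc i) else (g 0 + g n)/2)"
    by (cases "i < n") (simp_all add: sum_subtractf sum.distrib sum_delta_real)
  finally show ?thesis .
qed

lemma core1: "(Mf x i j - Mf x (Suc i) j) - (Mf x i (Suc j) - Mf x (Suc i) (Suc j)) =
   (if i = j then -1-2*x else if Suc i = j \<or> Suc j = i then x else 0)"
  by (cases i j rule: linorder_cases) (auto simp: Mf_def abs_if field_simps)

lemma core2: "i < n \<Longrightarrow> (Mf x i 0 - Mf x (Suc i) 0 + (Mf x i n - Mf x (Suc i) n)) / 2 = vv n x i"
  by (auto simp: Mf_def abs_if vv_def field_simps)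

lemma core3: "j < n \<Longrightarrow> (Mf x 0 j + Mf x n j) / 2 - (Mf x 0 (Suc j) + Mf x n (Suc j)) / 2 = vv n x j"
  by (auto simp: Mf_def abs_if vv_def field_simps)

lemma core4: "0 < n \<Longrightarrow> ((Mf x 0 0 + Mf x n 0)/2 + (Mf x 0 n + Mf x n n)/2) / 2 = real n/4 - x/2"
  by (auto simp: Mf_def)

lemma congr: assumes "1 \<le> n"
  shows "Rm n * (A_mat (Suc n) - x \<cdot>\<^sub>m 1\<^sub>m (Suc n)) * (Rm n)\<^sup>T = Nn n x"
proof (rule eq_matI)
  let ?M = "A_mat (Suc n) - x \<cdot>\<^sub>m 1\<^sub>m (Suc n)"
  fix i j assume "i < dim_row (Nn n x)" "j < dim_col (Nn n x)"
  then have i: "i < Suc n" and j: "j < Suc n" by (auto simp: Nn_def)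
  have RM: "Rm n * ?M \<in> carrier_mat (Suc n) (Suc n)" by (rule mult_carrier_mat) auto
  have RT: "(Rm n)\<^sup>T \<in> carrier_mat (Suc n) (Suc n)" by simp
  have e1: "(Rm n * ?M) $$ (i,l) = (if i < n then Mf x i l - Mf x (Suc i) l else (Mf x 0 l + Mf x n l)/2)"
    if l: "l < Suc n" for l
  proof -
    have "(Rm n * ?M) $$ (i,l) = (\<Sum>m<Suc n. Rm n $$ (i,m) * ?M $$ (m,l))"
      by (rule mult_entry[OF Rm_carrier M_carrier i l])
    also have "\<dots> = (\<Sum>m<Suc n. Rm n $$ (i,m) * Mf x m l)"
    proof (rule sum.cong)
      fix m assume "m \<in> {..<Suc n}"
      then show "Rm n $$ (i,m) * ?M $$ (m,l) = Rm n $$ (i,m) * Mf x m l"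
        by (subst M_entry) (use l in auto)
    qed simp
    also have "\<dots> = (if i < n then Mf x i l - Mf x (Suc i) l else (Mf x 0 l + Mf x n l)/2)"
      by (rule Rm_comb[OF i])
    finally show ?thesis .
  qed
  have "(Rm n * ?M * (Rm n)\<^sup>T) $$ (i,j) = (\<Sum>l<Suc n. (Rm n * ?M) $$ (i,l) * (Rm n)\<^sup>T $$ (l,j))"
    by (rule mult_entry[OF RM RT i j])
  also have "\<dots> = (\<Sum>l<Suc n. Rm n $$ (j,l) * (Rm n * ?M) $$ (i,l))"
    by (rule sum.cong) (use j in \<open>auto simp: Rm_def\<close>)
  also have "\<dots> = (if j < n then (Rm n * ?M) $$ (i,j) - (Rm n * ?M) $$ (i,Suc j)
       else ((Rm n * ?M) $$ (i,0) + (Rm n * ?M) $$ (i,n))/2)"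
    by (rule Rm_comb[OF j])
  also have "\<dots> = Nn n x $$ (i,j)"
  proof (cases "i < n")
    case True
    then show ?thesis
    proof (cases "j < n")
      case True
      then have "Suc j < Suc n" by simp
      then show ?thesis unfolding e1[OF j] e1[OF \<open>Suc j < Suc n\<close>] using \<open>i<n\<close> True
        by (simp add: Nn_def Tm_def core1)
    next
      case False
      then have "j = n" using j by simp
      then show ?thesis unfolding e1[of 0, simplified] e1[of n, simplified] using \<open>i<n\<close> by (simp add: Nn_def core2)
    qed
  next
    case False
    then have iN: "i = n" using i by simp
    show ?thesis
    proof (cases "j < n")
      case True
      then have "Suc j < Suc n" by simp
      then show ?thesis unfolding e1[OF j] e1[OF \<open>Suc j < Suc n\<close>] using iN True
        by (simp add: Nn_def core3)
    next
      case False
      then have "j = n" using j by simp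
      then show ?thesis unfolding e1[of 0, simplified] e1[of n, simplified] using iN assms by (simp add: Nn_def core4)
    qed
  qed
  finally show "(Rm n * ?M * (Rm n)\<^sup>T) $$ (i,j) = Nn n x $$ (i,j)" .
qed (auto simp: Nn_def Rm_def)

lemma C_Nn: assumes "1 \<le> n" shows "C_charpoly (Suc n) x = det (Nn n x)"
proof -
  let ?M = "A_mat (Suc n) - x \<cdot>\<^sub>m 1\<^sub>m (Suc n)"
  have RM: "Rm n * ?M \<in> carrier_mat (Suc n) (Suc n)" by (rule mult_carrier_mat) auto
  have "det (Nn n x) = det (Rm n * ?M) * det ((Rm n)\<^sup>T)"
    unfolding congr[OF assms, symmetric] by (rule det_mult[OF RM]) simp
  also have "\<dots> = det ?M"
    by (simp add: det_mult[OF Rm_carrier M_carrier] det_transpose[OF Rm_carrier] det_Rm)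
  finally show ?thesis by (simp add: C_charpoly_def)
qed



lemma det_Nn_all: assumes "1 \<le> n"
  shows "det (Nn n x) = (real n/4 - x/2) * det (Tm n x) - x^2/2 * det (Tm (n-1) x) + (-1)^(Suc n) * x^(Suc n) / 2"
proof (cases "n = 1")
  case True
  have "det (Tm 1 x) = -1-2*x" by (subst det_single) (auto simp: Tm_def)
  then show ?thesis using True det_Nn1[of x] by (simp add: power2_eq_square)
next
  case False
  then show ?thesis using det_Nn[of n x] assms by simp
qed

theorem theorem2p2:
  fixes k :: nat and x :: real
  assumes "k \<ge> 1" and "x \<noteq> 0"
  shows "C_charpoly k x =
    (-1) ^ k * x ^ k *
      (1 - real k / 4 * (\<Sum>j = 1..k - 1.
          real j / real (j + 1) * real ((k + j) choose (2 * j + 1)) * inverse x ^ (j + 1)))"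
proof (cases "k = 1")
  case True
  have "C_charpoly 1 x = -x"
    unfolding C_charpoly_def by (subst det_single) (auto simp: A_mat_def)
  then show ?thesis using True by simp
next
  case False
  then obtain n where k: "k = Suc n" and n: "1 \<le> n" using assms by (cases k) auto
  then obtain m where m: "n = Suc m" by (cases n) auto
  have s: "S1 n x = S0 n x + x * S1 m x" using S1_Suc[of m x] m by simp
  have "C_charpoly k x = (real n/4 - x/2) * det (Tm n x) - x^2/2 * det (Tm (n-1) x) + (-1)^(Suc n) * x^(Suc n) / 2"
    using C_Nn[OF n] det_Nn_all[OF n] k by simp
  also have "\<dots> = (real n/4 - x/2) * ((-1)^n * S1 n x) - x^2/2 * ((-1)^m * S1 m x) + (-1)^(Suc n) * x^(Suc n) / 2"
    using Tm_closed[of n x] Tm_closed[of m x] m by simp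
  also have "\<dots> = (-1)^(Suc n) * ((x/2) * S0 n x - real n/4 * S1 n x + x^(Suc n)/2)"
    unfolding s by (simp add: m algebra_simps power2_eq_square)
  also have "\<dots> = (-1)^(Suc n) * (x ^ Suc n * (1 - real (Suc n) / 4 * (\<Sum>j = 1..Suc n - 1.
          real j / real (j + 1) * real ((Suc n + j) choose (2 * j + 1)) * inverse x ^ (j + 1))))"
    by (simp only: final_alg[OF assms(2)])
  finally show ?thesis using k by (simp add: mult.assoc)
qed

end
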